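(* The dcpo $\mathcal Q\mathbb R_\ell$ is not core-compact in its Scott topology.
   Context: The Sorgenfrey line $\mathbb R_\ell$ is $\mathbb R$ with the topology generated by the half-open intervals $[a,b[$, $a<b$. $\mathcal Q\mathbb R_\ell$ is the set of non-empty compact subsets of $\mathbb R_\ell$ ordered by reverse inclusion; it is a dcpo. A space is core-compact if its lattice of open sets is a continuous lattice. *)

theory Defs
  imports "HOL-Analysis.Analysis"
begin

definition sorgenfrey :: "real topology" where
  "sorgenfrey = topology_generated_by {{a..<b} | a b. a < b}"

definition QRl :: "real set set" where
  "QRl = {K. K \<noteq> {} \<and> compactin sorgenfrey K}"

definition Q_le :: "real set \<Rightarrow> real set \<Rightarrow> bool" where
  "Q_le K L \<longleftrightarrow> L \<subseteq> K"

definition directed_in :: "'a set \<Rightarrow> ('a \<Rightarrow> 'a \<Rightarrow> bool) \<Rightarrow> 'a set \<Rightarrow> bool" where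
  "directed_in P le D \<longleftrightarrow> D \<subseteq> P \<and> D \<noteq> {} \<and>
     (\<forall>x\<in>D. \<forall>y\<in>D. \<exists>z\<in>D. le x z \<and> le y z)"

definition is_lub_in :: "'a set \<Rightarrow> ('a \<Rightarrow> 'a \<Rightarrow> bool) \<Rightarrow> 'a set \<Rightarrow> 'a \<Rightarrow> bool" where
  "is_lub_in P le D s \<longleftrightarrow> s \<in> P \<and> (\<forall>d\<in>D. le d s) \<and>
     (\<forall>u\<in>P. (\<forall>d\<in>D. le d u) \<longrightarrow> le s u)"

definition scott_open :: "'a set \<Rightarrow> ('a \<Rightarrow> 'a \<Rightarrow> bool) \<Rightarrow> 'a set \<Rightarrow> bool" where
  "scott_open P le U \<longleftrightarrow> U \<subseteq> P \<and>
     (\<forall>x\<in>U. \<forall>y\<in>P. le x y \<longrightarrow> y \<in> U) \<and>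
     (\<forall>D s. directed_in P le D \<and> is_lub_in P le D s \<and> s \<in> U \<longrightarrow> D \<inter> U \<noteq> {})"

definition scott_topology :: "'a set \<Rightarrow> ('a \<Rightarrow> 'a \<Rightarrow> bool) \<Rightarrow> 'a topology" where
  "scott_topology P le = topology (scott_open P le)"

lemma istopology_scott_open: "istopology (scott_open P le)"
  unfolding istopology_def
proof (intro conjI allI impI)
  fix S T assume S: "scott_open P le S" and T: "scott_open P le T"
  show "scott_open P le (S \<inter> T)"
    unfolding scott_open_def
  proof (intro conjI allI impI ballI)
    show "S \<inter> T \<subseteq> P" using S unfolding scott_open_def by blast
  next
    fix x y assume "x \<in> S \<inter> T" "y \<in> P" "le x y"
    then show "y \<in> S \<inter> T" using S T unfolding scott_open_def by blast
  next
    fix D s assume a: "directed_in P le D \<and> is_lub_in P le D s \<and> s \<in> S \<inter> T"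
    then obtain d1 where d1: "d1 \<in> D" "d1 \<in> S" using S unfolding scott_open_def by blast
    from a obtain d2 where d2: "d2 \<in> D" "d2 \<in> T" using T unfolding scott_open_def by blast
    from a d1 d2 obtain z where z: "z \<in> D" "le d1 z" "le d2 z"
      unfolding directed_in_def by blast
    have "z \<in> P" using a z unfolding directed_in_def by blast
    then have "z \<in> S" "z \<in> T" using S T d1 d2 z unfolding scott_open_def by blast+
    then show "D \<inter> (S \<inter> T) \<noteq> {}" using z by blast
  qed
next
  fix K assume K: "\<forall>S\<in>K. scott_open P le S"
  show "scott_open P le (\<Union>K)"
    unfolding scott_open_def
  proof (intro conjI allI impI ballI)
    show "\<Union>K \<subseteq> P" using K unfolding scott_open_def by blast
  next
    fix x y assume "x \<in> \<Union>K" "y \<in> P" "le x y"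
    then show "y \<in> \<Union>K" using K unfolding scott_open_def by blast
  next
    fix D s assume a: "directed_in P le D \<and> is_lub_in P le D s \<and> s \<in> \<Union>K"
    then obtain U where "U \<in> K" "s \<in> U" by blast
    with a K have "D \<inter> U \<noteq> {}" unfolding scott_open_def by blast
    then show "D \<inter> \<Union>K \<noteq> {}" using \<open>U \<in> K\<close> by blast
  qed
qed

text \<open>Way-below relation in the lattice of open sets of X (sups are unions),
and core-compactness: the lattice of open sets is a continuous lattice.\<close>
definition open_way_below :: "'a topology \<Rightarrow> 'a set \<Rightarrow> 'a set \<Rightarrow> bool" where
  "open_way_below X U V \<longleftrightarrow> openin X U \<and> openin X V \<and>
     (\<forall>\<D>. \<D> \<noteq> {} \<and> (\<forall>W\<in>\<D>. openin X W) \<and>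
          (\<forall>A\<in>\<D>. \<forall>B\<in>\<D>. \<exists>C\<in>\<D>. A \<union> B \<subseteq> C) \<and> V \<subseteq> \<Union>\<D>
          \<longrightarrow> (\<exists>W\<in>\<D>. U \<subseteq> W))"

definition core_compact :: "'a topology \<Rightarrow> bool" where
  "core_compact X \<longleftrightarrow>
     (\<forall>V. openin X V \<longrightarrow> V = \<Union>{U. open_way_below X U V})"

end

theory Submission
  imports Defs
begin

lemma sorg_open_iff: "openin sorgenfrey B \<longleftrightarrow> generate_topology_on {{a..<b} | a b. a < (b::real)} B"
  unfolding sorgenfrey_def by (rule openin_topology_generated_by_iff)

lemma sorg_basis: "a < b \<Longrightarrow> openin sorgenfrey {a..<b}"
  unfolding sorgenfrey_def by (rule topology_generated_by_Basis) blast

lemma sorg_topspace[simp]: "topspace sorgenfrey = UNIV"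
proof -
  have "x \<in> \<Union>{{a..<b} | a b. a < (b::real)}" for x
  proof -
    have "{x..<x+1} \<in> {{a..<b} | a b. a < (b::real)}" by force
    then show ?thesis by (rule UnionI) simp
  qed
  then show ?thesis unfolding sorgenfrey_def topology_generated_by_topspace by blast
qed

lemma sorg_nbhd_gen:
  assumes "generate_topology_on {{a..<b} | a b. a < (b::real)} B"
  shows "\<forall>x\<in>B. \<exists>e>0. {x..<x+e} \<subseteq> B"
  using assms
proof (induction rule: generate_topology_on.induct)
  case Empty
  then show ?case by simp
next
  case (Int a b)
  show ?case
  proof
    fix x assume "x \<in> a \<inter> b"
    then obtain e1 e2 where "e1 > 0" "{x..<x+e1} \<subseteq> a" "e2 > 0" "{x..<x+e2} \<subseteq> b"
      using Int.IH by blast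
    then show "\<exists>e>0. {x..<x+e} \<subseteq> a \<inter> b"
      by (intro exI[of _ "min e1 e2"]) force
  qed
next
  case (UN K)
  show ?case
  proof
    fix x assume "x \<in> \<Union>K"
    then obtain k where "k \<in> K" "x \<in> k" by blast
    then obtain e where "e > 0" "{x..<x+e} \<subseteq> k" using UN.IH by blast
    then show "\<exists>e>0. {x..<x+e} \<subseteq> \<Union>K" using \<open>k \<in> K\<close> by blast
  qed
next
  case (Basis s)
  then obtain a b where s: "s = {a..<b}" "a < b" by blast
  show ?case
  proof
    fix x assume "x \<in> s"
    then show "\<exists>e>0. {x..<x+e} \<subseteq> s" using s by (intro exI[of _ "b - x"]) auto
  qed
qed

lemma sorg_nbhd: "openin sorgenfrey B \<Longrightarrow> x \<in> B \<Longrightarrow> \<exists>e>0. {x..<x+e} \<subseteq> B"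
  using sorg_nbhd_gen sorg_open_iff by blast

lemma sorg_open_compl:
  assumes "p < a"
  shows "openin sorgenfrey (- {p..<a})"
proof (subst openin_subopen, intro ballI)
  fix x assume x: "x \<in> - {p..<a}"
  show "\<exists>T. openin sorgenfrey T \<and> x \<in> T \<and> T \<subseteq> - {p..<a}"
  proof (cases "x < p")
    case True
    then show ?thesis by (intro exI[of _ "{x..<p}"]) (auto intro: sorg_basis)
  next
    case False
    then have "x \<ge> a" using x by auto
    then show ?thesis by (intro exI[of _ "{x..<x+1}"]) (auto intro: sorg_basis)
  qed
qed

lemma sorg_Hausdorff: "Hausdorff_space sorgenfrey"
  unfolding Hausdorff_space_def
proof (intro allI impI)
  fix x y :: real assume "x \<in> topspace sorgenfrey \<and> y \<in> topspace sorgenfrey \<and> x \<noteq> y"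
  then have "x < y \<or> y < x" by auto
  then show "\<exists>U V. openin sorgenfrey U \<and> openin sorgenfrey V \<and> x \<in> U \<and> y \<in> V \<and> disjnt U V"
  proof
    assume "x < y"
    then show ?thesis
      by (intro exI[of _ "{x..<y}"] exI[of _ "{y..<y+1}"]) (auto intro: sorg_basis simp: disjnt_def)
  next
    assume "y < x"
    then show ?thesis
      by (intro exI[of _ "{x..<x+1}"] exI[of _ "{y..<x}"]) (auto intro: sorg_basis simp: disjnt_def)
  qed
qed

lemma sorg_compact_compl_open: "compactin sorgenfrey K \<Longrightarrow> openin sorgenfrey (- K)"
  using compactin_imp_closedin[OF sorg_Hausdorff] unfolding closedin_def
  by (simp add: Compl_eq_Diff_UNIV)

lemma openin_scott: "openin (scott_topology P le) U \<longleftrightarrow> scott_open P le U"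
  unfolding scott_topology_def by (metis topology_inverse'[OF istopology_scott_open])

lemma directed_lb:
  assumes "directed_in P Q_le D" "finite F" "F \<subseteq> D"
  shows "\<exists>z\<in>D. \<forall>f\<in>F. z \<subseteq> f"
  using assms(2,3)
proof (induction F rule: finite_induct)
  case empty
  then show ?case using assms(1) unfolding directed_in_def by blast
next
  case (insert x F)
  then obtain z where z: "z \<in> D" "\<forall>f\<in>F. z \<subseteq> f" by blast
  then obtain w where "w \<in> D" "w \<subseteq> x" "w \<subseteq> z"
    using assms(1) insert.prems unfolding directed_in_def Q_le_def by blast
  then show ?case using z by blast
qed

lemma box_open:
  assumes O: "openin sorgenfrey Op"
  shows "scott_open QRl Q_le {K\<in>QRl. K \<subseteq> Op}"
  unfolding scott_open_def
proof (intro conjI allI impI ballI)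
  show "{K\<in>QRl. K \<subseteq> Op} \<subseteq> QRl" by blast
next
  fix x y assume "x \<in> {K\<in>QRl. K \<subseteq> Op}" "y \<in> QRl" "Q_le x y"
  then show "y \<in> {K\<in>QRl. K \<subseteq> Op}" by (auto simp: Q_le_def)
next
  fix D s assume a: "directed_in QRl Q_le D \<and> is_lub_in QRl Q_le D s \<and> s \<in> {K\<in>QRl. K \<subseteq> Op}"
  show "D \<inter> {K\<in>QRl. K \<subseteq> Op} \<noteq> {}"
  proof (rule ccontr)
    assume "\<not> ?thesis"
    then have nd: "\<forall>d\<in>D. \<not> d \<subseteq> Op" using a unfolding directed_in_def by blast
    obtain d0 where d0: "d0 \<in> D" using a unfolding directed_in_def by blast
    have DQ: "D \<subseteq> QRl" using a unfolding directed_in_def by blast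
    have cd0: "compactin sorgenfrey d0" using d0 DQ unfolding QRl_def by blast
    have "closedin sorgenfrey (d0 - Op)"
      by (rule closedin_diff[OF compactin_imp_closedin[OF sorg_Hausdorff cd0] O])
    then have cdO: "compactin sorgenfrey (d0 - Op)"
      using closed_compactin[OF cd0] by blast
    have "\<exists>x\<in>d0 - Op. \<forall>d\<in>D. x \<in> d"
    proof (rule ccontr)
      assume "\<not> (\<exists>x\<in>d0 - Op. \<forall>d\<in>D. x \<in> d)"
      then have cov: "d0 - Op \<subseteq> \<Union>((\<lambda>d. - d) ` D)" by blast
      have opn: "\<forall>B\<in>(\<lambda>d. - d) ` D. openin sorgenfrey B"
        using DQ sorg_compact_compl_open unfolding QRl_def by auto
      obtain F where F: "finite F" "F \<subseteq> (\<lambda>d. - d) ` D" "d0 - Op \<subseteq> \<Union>F"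
        using cdO cov opn unfolding compactin_def by meson
      obtain G where G: "finite G" "G \<subseteq> D" "F = (\<lambda>d. - d) ` G"
        using finite_subset_image[OF F(1,2)] by blast
      obtain z where z: "z \<in> D" "\<forall>f\<in>insert d0 G. z \<subseteq> f"
        using directed_lb[of QRl D "insert d0 G"] a G d0 by blast
      have "z - Op \<subseteq> \<Union>F" using z F by blast
      moreover have "z \<inter> \<Union>F = {}" using z G by blast
      ultimately have "z \<subseteq> Op" by blast
      then show False using nd z by blast
    qed
    then obtain x where x: "x \<in> d0" "x \<notin> Op" "\<forall>d\<in>D. x \<in> d" by blast
    have "{x} \<in> QRl" unfolding QRl_def by simp
    then have "Q_le s {x}" using a x unfolding is_lub_in_def Q_le_def by blast
    then show False using a x unfolding Q_le_def by auto
  qed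
qed

theorem proposition4p22:
  shows "\<not> core_compact (scott_topology QRl Q_le)"
proof
  let ?X = "scott_topology QRl Q_le"
  assume cc: "core_compact ?X"
  have QRlopen: "openin ?X QRl" unfolding openin_scott scott_open_def directed_in_def by blast
  have z: "{0::real} \<in> QRl" unfolding QRl_def by simp
  then obtain U where U: "open_way_below ?X U QRl" "{0} \<in> U"
    using cc QRlopen unfolding core_compact_def by blast
  have "openin ?X U" using U(1) unfolding open_way_below_def by blast
  then have Uo: "scott_open QRl Q_le U" unfolding openin_scott .
  have wb: "\<forall>DD. DD \<noteq> {} \<and> (\<forall>W\<in>DD. openin ?X W) \<and>
          (\<forall>A\<in>DD. \<forall>B\<in>DD. \<exists>C\<in>DD. A \<union> B \<subseteq> C) \<and> QRl \<subseteq> \<Union>DD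
          \<longrightarrow> (\<exists>W\<in>DD. U \<subseteq> W)" using U(1) unfolding open_way_below_def by blast
  have claim: "\<exists>y. 1/(real k+2) < y \<and> y < 1/(real k+1) \<and> (\<forall>K\<in>U. y \<notin> K)" for k::nat
  proof -
    define a where "a = 1/(real k+1)"
    define b where "b = 1/(real k+2)"
    have ba: "b < a" unfolding a_def b_def by (simp add: frac_less2)
    define Op where "Op t = - {t..<a}" for t
    define DD where "DD = (\<lambda>t. {K\<in>QRl. K \<subseteq> Op t}) ` {b<..<a}"
    have "\<exists>W\<in>DD. U \<subseteq> W"
    proof -
      have "DD \<noteq> {}" using ba unfolding DD_def by auto
      moreover have "\<forall>W\<in>DD. openin ?X W"
      proof
        fix W assume "W \<in> DD"
        then obtain t where t: "t \<in> {b<..<a}" "W = {K\<in>QRl. K \<subseteq> Op t}" unfolding DD_def by blast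
        have "openin sorgenfrey (Op t)" unfolding Op_def by (rule sorg_open_compl) (use t in auto)
        then show "openin ?X W" unfolding t(2) openin_scott by (rule box_open)
      qed
      moreover have "\<forall>A\<in>DD. \<forall>B\<in>DD. \<exists>C\<in>DD. A \<union> B \<subseteq> C"
      proof (intro ballI)
        fix A B assume "A\<in>DD" "B\<in>DD"
        then obtain s t where st: "s\<in>{b<..<a}" "t \<in>{b<..<a}" "A = {K\<in>QRl. K \<subseteq> Op s}"
          "B = {K\<in>QRl. K \<subseteq> Op t}" unfolding DD_def by blast
        show "\<exists>C\<in>DD. A\<union>B \<subseteq> C" using st
          by (intro bexI[of _ "{K\<in>QRl. K \<subseteq> Op (max s t)}"]) (auto simp: DD_def Op_def)
      qed
      moreover have "QRl \<subseteq> \<Union>DD"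
      proof
        fix K assume K: "K \<in> QRl"
        have cov: "K \<subseteq> \<Union>(Op ` {b<..<a})"
        proof
          fix x assume "x\<in>K"
          show "x \<in> \<Union>(Op ` {b<..<a})"
          proof (cases "x < a")
            case True
            define t where "t = max ((x+a)/2) ((a+b)/2)"
            have "t \<in> {b<..<a}" "x < t" using True ba unfolding t_def by (auto simp: max_def)
            then show ?thesis unfolding Op_def by (intro UN_I[of t]) auto
          next
            case False
            have "(a+b)/2 \<in> {b<..<a}" using ba by auto
            then show ?thesis unfolding Op_def using False by (intro UN_I[of "(a+b)/2"]) auto
          qed
        qed
        have opn: "\<forall>B\<in>Op ` {b<..<a}. openin sorgenfrey B"
          unfolding Op_def using sorg_open_compl by auto
        have cK: "compactin sorgenfrey K" using K unfolding QRl_def by blast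
        have "\<exists>F. finite F \<and> F \<subseteq> Op ` {b<..<a} \<and> K \<subseteq> \<Union>F"
          using cK[unfolded compactin_def, THEN conjunct2, rule_format, of "Op ` {b<..<a}"] cov opn by blast
        then obtain F where F: "finite F" "F \<subseteq> Op ` {b<..<a}" "K \<subseteq> \<Union>F" by blast
        obtain T where T: "finite T" "T \<subseteq> {b<..<a}" "F = Op ` T"
          using finite_subset_image[OF F(1,2)] by blast
        have "T \<noteq> {}" using K F T unfolding QRl_def by auto
        then have MT: "Max T \<in> {b<..<a}" using T Max_in by blast
        have "\<And>t. t \<in> T \<Longrightarrow> Op t \<subseteq> Op (Max T)" unfolding Op_def using T by auto
        then have "K \<subseteq> Op (Max T)" using F T by blast
        then show "K \<in> \<Union>DD" unfolding DD_def using MT K by blast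
      qed
      ultimately show ?thesis using wb[THEN spec, of DD] by blast
    qed
    then obtain t where t: "t \<in> {b<..<a}" "U \<subseteq> {K\<in>QRl. K \<subseteq> Op t}" unfolding DD_def by blast
    have "\<forall>K\<in>U. t \<notin> K"
    proof
      fix K assume "K \<in> U"
      then have "K \<subseteq> Op t" using t by blast
      then show "t \<notin> K" using t unfolding Op_def by auto
    qed
    then show ?thesis using t unfolding a_def b_def by (intro exI[of _ t]) auto
  qed
  have "\<exists>y. \<forall>k. 1/(real k+2) < y k \<and> y k < 1/(real k+1) \<and> (\<forall>K\<in>U. y k \<notin> K)"
    by (rule choice) (use claim in blast)
  then obtain y where y: "\<forall>k. 1/(real k+2) < y k \<and> y k < 1/(real k+1) \<and> (\<forall>K\<in>U. y k \<notin> K)"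
    by blast
  define L where "L n = insert 0 (y ` {n..})" for n
  have Lc: "compactin sorgenfrey (L n)" for n
    unfolding compactin_def
  proof (intro conjI allI impI)
    show "L n \<subseteq> topspace sorgenfrey" by simp
    fix UU assume H: "(\<forall>B\<in>UU. openin sorgenfrey B) \<and> L n \<subseteq> \<Union>UU"
    obtain B0 where B0: "B0 \<in> UU" "0 \<in> B0" using H unfolding L_def by auto
    obtain e where e: "e>0" "{0..<e} \<subseteq> B0" using sorg_nbhd[of B0 0] H B0 by auto
    have "\<forall>k\<ge>n. \<exists>B. B\<in>UU \<and> y k \<in> B" using H unfolding L_def by auto
    then obtain B where B: "\<And>k. k \<ge> n \<Longrightarrow> B k \<in> UU \<and> y k \<in> B k" by metis
    define N where "N = nat \<lceil>1/e\<rceil>"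
    have small: "y k < e" if "k > N" for k
    proof -
      have "real N \<ge> 1/e" unfolding N_def by linarith
      then have "real k + 1 > 1/e" using that by linarith
      then have "1 < (real k+1)*e" using e(1) by (simp add: divide_less_eq)
      then have "1/(real k + 1) < e" by (simp add: divide_less_eq mult.commute)
      moreover have "y k < 1/(real k + 1)" using y by blast
      ultimately show ?thesis by linarith
    qed
    have ypos: "y k > 0" for k
    proof -
      have "0 < 1/(real k+2)" by simp
      moreover have "1/(real k+2) < y k" using y by blast
      ultimately show ?thesis by linarith
    qed
    show "\<exists>F. finite F \<and> F \<subseteq> UU \<and> L n \<subseteq> \<Union>F"
    proof (intro exI[of _ "insert B0 (B ` {n..N})"] conjI)
      show "finite (insert B0 (B ` {n..N}))" by simp
      show "insert B0 (B ` {n..N}) \<subseteq> UU" using B0 B by auto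
      show "L n \<subseteq> \<Union> (insert B0 (B ` {n..N}))"
      proof
        fix x assume "x \<in> L n"
        then consider "x = 0" | k where "k \<ge> n" "x = y k" unfolding L_def by auto
        then show "x \<in> \<Union> (insert B0 (B ` {n..N}))"
        proof cases
          case 1 then show ?thesis using B0 by auto
        next
          case (2 k)
          show ?thesis
          proof (cases "k \<le> N")
            case True
            then have "B k \<in> insert B0 (B ` {n..N})" using 2 by auto
            moreover have "x \<in> B k" using 2 B by auto
            ultimately show ?thesis by blast
          next
            case False
            then have "y k \<in> {0..<e}" using small ypos[of k] by (simp add: less_imp_le)
            then show ?thesis using 2 e B0 by auto
          qed
        qed
      qed
    qed
  qed
  have LQ: "L n \<in> QRl" for n using Lc[of n] unfolding QRl_def L_def by auto
  have Lmono: "n \<le> m \<Longrightarrow> L m \<subseteq> L n" for n m unfolding L_def by auto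
  have dir: "directed_in QRl Q_le (range L)"
    unfolding directed_in_def Q_le_def
  proof (intro conjI ballI)
    show "range L \<subseteq> QRl" using LQ by blast
    show "range L \<noteq> {}" by blast
    fix A B assume "A \<in> range L" "B \<in> range L"
    then obtain n m where "A = L n" "B = L m" by blast
    then show "\<exists>z\<in>range L. z \<subseteq> A \<and> z \<subseteq> B"
      using Lmono[of n "max n m"] Lmono[of m "max n m"] by auto
  qed
  have lub: "is_lub_in QRl Q_le (range L) {0}"
    unfolding is_lub_in_def Q_le_def
  proof (intro conjI ballI impI)
    show "{0} \<in> QRl" by (rule z)
  next
    fix d assume "d \<in> range L" then show "{0} \<subseteq> d" unfolding L_def by auto
  next
    fix u assume u: "u \<in> QRl" "\<forall>d\<in>range L. u \<subseteq> d"
    show "u \<subseteq> {0}"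
    proof
      fix x assume x: "x \<in> u"
      show "x \<in> {0}"
      proof (rule ccontr)
        assume nz: "x \<notin> {0}"
        have "x \<in> L 0" using u x by auto
        then obtain k where k: "x = y k" using nz unfolding L_def by auto
        have "x \<in> L (Suc k)" using u x by auto
        then obtain j where j: "j \<ge> Suc k" "x = y j" using nz unfolding L_def by auto
        have "real j + 1 \<ge> real k + 2" using j by simp
        then have "1/(real j+1) \<le> 1/(real k+2)" by (simp add: frac_le)
        moreover have "y j < 1/(real j+1)" "1/(real k+2) < y k" using y by blast+
        ultimately show False using j k by linarith
      qed
    qed
  qed
  have "\<forall>D s. directed_in QRl Q_le D \<and> is_lub_in QRl Q_le D s \<and> s \<in> U \<longrightarrow> D \<inter> U \<noteq> {}"
    using Uo unfolding scott_open_def by blast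
  then have "range L \<inter> U \<noteq> {}" using dir lub U(2) by blast
  then obtain n where "L n \<in> U" by blast
  moreover have "y n \<in> L n" unfolding L_def by auto
  ultimately show False using y by blast
qed

end
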